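(* Let $\tau$ be any tiling of the plane by the Kari–Culik tileset $T$ described in the context, and let $u=(u_k)_{k\in\mathbb{Z}}$ be the sequence of numerical values of the colors along a horizontal line of $\tau$ (the top colors of the tiles $\tau(k,j)$, $k\in\mathbb{Z}$, for fixed $j$, with $0'$ counted as $0$). If the average of $u$ (the limit of averages over finite segments as their length tends to infinity) lies in the open interval $(\frac45,\frac{9}{10})$, then the words of the family $\{0\,1^{\alpha}\,0 : \alpha>3\}$ occur in $u$ with positive density, i.e. the set of positions $k$ at which some word $0\,1^{\alpha}\,0$ with $\alpha>3$ begins in $u$ has positive density in $\mathbb{Z}$.
   Context: A Wang tile is a unit square with a color on each side; a tiling of the plane assigns a tile to every cell of $\mathbb{Z}^2$ so that adjacent tiles have equal colors on their common side. The Kari–Culik tileset $T$ uses horizontal-edge (top/bottom) colors $0,0',1,2$ (with numerical values $0,0,1,2$) and vertical-edge colors from two disjoint state sets $\{s_0,s_1\}$ and $\{r_0,r_{1/3},r_{2/3}\}$. Writing a tile as (left, bottom, top, right), the 13 tiles are: $(s_0,0,0',s_0)$, $(s_1,0,0',s_1)$, $(s_0,1,2,s_0)$, $(s_1,1,2,s_1)$, $(s_0,1,1,s_1)$, $(s_1,0,1,s_0)$, $(s_1,0',1,s_0)$, $(r_0,2,1,r_{1/3})$, $(r_{1/3},2,1,r_{2/3})$, $(r_{1/3},1,0,r_0)$, $(r_{2/3},1,0,r_{1/3})$, $(r_0,1,1,r_{2/3})$, $(r_{2/3},2,0,r_0)$. Every horizontal line of every tiling has such an average. In the words $0\,1^\alpha\,0$,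 the letter $0$ stands for the value $0$ (color $0$ or $0'$). *)

theory Defs
  imports Complex_Main
begin

datatype hcol = H0 | H0' | H1 | H2
datatype vcol = S0 | S1 | R0 | R13 | R23

fun hval :: "hcol \<Rightarrow> int" where
  "hval H0 = 0" | "hval H0' = 0" | "hval H1 = 1" | "hval H2 = 2"

text \<open>A Wang tile written as (left, bottom, top, right).\<close>
type_synonym tile = "vcol \<times> hcol \<times> hcol \<times> vcol"

definition tleft :: "tile \<Rightarrow> vcol" where "tleft t = fst t"
definition tbot :: "tile \<Rightarrow> hcol" where "tbot t = fst (snd t)"
definition ttop :: "tile \<Rightarrow> hcol" where "ttop t = fst (snd (snd t))"
definition tright :: "tile \<Rightarrow> vcol" where "tright t = snd (snd (snd t))"

definition KC :: "tile set" where
  "KC = {(S0,H0,H0',S0), (S1,H0,H0',S1), (S0,H1,H2,S0), (S1,H1,H2,S1),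
         (S0,H1,H1,S1), (S1,H0,H1,S0), (S1,H0',H1,S0),
         (R0,H2,H1,R13), (R13,H2,H1,R23), (R13,H1,H0,R0),
         (R23,H1,H0,R13), (R0,H1,H1,R23), (R23,H2,H0,R0)}"

text \<open>A tiling of the plane: cell (k,j), k horizontal, j vertical (upwards).
  Adjacent tiles agree on their common side.\<close>
definition is_tiling :: "tile set \<Rightarrow> (int \<times> int \<Rightarrow> tile) \<Rightarrow> bool" where
  "is_tiling T \<tau> \<longleftrightarrow>
     (\<forall>k j. \<tau> (k, j) \<in> T) \<and>
     (\<forall>k j. tright (\<tau> (k, j)) = tleft (\<tau> (k + 1, j))) \<and>
     (\<forall>k j. ttop (\<tau> (k, j)) = tbot (\<tau> (k, j + 1)))"

definition has_average :: "(int \<Rightarrow> int) \<Rightarrow> real \<Rightarrow> bool" where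
  "has_average u L \<longleftrightarrow>
     (\<forall>\<epsilon>>0. \<exists>N::nat. \<forall>(a::int) (n::nat). n \<ge> N \<longrightarrow> n > 0 \<longrightarrow>
        \<bar>(\<Sum>k\<in>{a..<a + int n}. real_of_int (u k)) / real n - L\<bar> < \<epsilon>)"

definition pos_density :: "int set \<Rightarrow> bool" where
  "pos_density S \<longleftrightarrow>
     (\<exists>c::real. c > 0 \<and> (\<exists>N::nat. \<forall>(a::int) (n::nat). n \<ge> N \<longrightarrow>
        real (card (S \<inter> {a..<a + int n})) \<ge> c * real n))"

definition word_at :: "(int \<Rightarrow> int) \<Rightarrow> nat \<Rightarrow> int \<Rightarrow> bool" where
  "word_at u \<alpha> k \<longleftrightarrow>
     u k = 0 \<and> (\<forall>i::nat. 1 \<le> i \<and> i \<le> \<alpha> \<longrightarrow> u (k + int i) = 1) \<and>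
     u (k + int \<alpha> + 1) = 0"

end

theory Submission
  imports Defs
begin

lemma density_from_chunks:
  assumes K: "K > 0" and ch: "\<And>a. \<exists>k. k \<in> S \<and> a \<le> k \<and> k < a + int K"
  shows "pos_density S"
  unfolding pos_density_def
proof (intro exI conjI allI impI)
  show "1 / (2 * real K) > 0" using K by simp
  fix a :: int and n :: nat
  assume n: "2 * K \<le> n"
  define m where "m = n div K"
  define g where "g i = (SOME k. k \<in> S \<and> a + int (i*K) \<le> k \<and> k < a + int (i*K) + int K)" for i
  have gp: "g i \<in> S \<and> a + int (i*K) \<le> g i \<and> g i < a + int (i*K) + int K" for i
    unfolding g_def by (rule someI_ex) (rule ch)
  have mK: "m * K \<le> n" unfolding m_def by simp
  have sub: "g ` {..<m} \<subseteq> S \<inter> {a..<a + int n}"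
  proof
    fix x assume "x \<in> g ` {..<m}"
    then obtain i where i: "i < m" "x = g i" by auto
    have "(i+1) * K \<le> m * K" using i by (intro mult_right_mono) auto
    hence "i*K + K \<le> n" using mK by (simp add: algebra_simps)
    hence "int (i*K) + int K \<le> int n" by (metis of_nat_add of_nat_le_iff)
    moreover have "0 \<le> int (i*K)" by simp
    ultimately show "x \<in> S \<inter> {a..<a + int n}" using gp[of i] i by (simp del: of_nat_mult)
  qed
  have inj: "inj_on g {..<m}"
  proof (rule inj_onI)
    fix i i' assume "i \<in> {..<m}" "i' \<in> {..<m}" "g i = g i'"
    show "i = i'"
    proof (rule ccontr)
      assume "i \<noteq> i'"
      then consider "i < i'" | "i' < i" by linarith
      then show False
      proof cases
        case 1
        hence "(i+1)*K \<le> i'*K" by (intro mult_right_mono) auto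
        hence "int (i*K) + int K \<le> int (i'*K)" by (metis of_nat_add of_nat_le_iff add.commute mult_Suc Suc_eq_plus1)
        thus False using gp[of i] gp[of i'] \<open>g i = g i'\<close> by (simp add: algebra_simps)
      next
        case 2
        hence "(i'+1)*K \<le> i*K" by (intro mult_right_mono) auto
        hence "int (i'*K) + int K \<le> int (i*K)" by (metis of_nat_add of_nat_le_iff add.commute mult_Suc Suc_eq_plus1)
        thus False using gp[of i] gp[of i'] \<open>g i = g i'\<close> by (simp add: algebra_simps)
      qed
    qed
  qed
  have "m \<le> card (S \<inter> {a..<a + int n})"
  proof -
    have "card (g ` {..<m}) = m" using inj by (simp add: card_image)
    moreover have "card (g ` {..<m}) \<le> card (S \<inter> {a..<a + int n})"
      by (rule card_mono) (use sub in auto)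
    ultimately show ?thesis by simp
  qed
  moreover have "real n / (2 * real K) \<le> real m"
  proof -
    have "n = m * K + n mod K" unfolding m_def by simp
    moreover have "n mod K < K" using K by simp
    ultimately have "n < m * K + K" by linarith
    hence "n \<le> 2 * (m * K)" using n by linarith
    hence "real n \<le> 2 * real m * real K" by (metis of_nat_le_iff of_nat_mult of_nat_numeral mult.assoc)
    thus ?thesis using K by (simp add: field_simps)
  qed
  ultimately show "1 / (2 * real K) * real n \<le> real (card (S \<inter> {a..<a + int n}))" by simp
qed


lemma sum_split_nat: fixes a b :: nat shows "(\<Sum>i<a+b. f i) = (\<Sum>i<a. f i) + (\<Sum>i<b. f (a+i))"
  by (induction b) (simp_all add: add.assoc)

lemma sum_first_zero:
  assumes "u x = 0" "\<And>k. u k \<le> (1::int)"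
  shows "(\<Sum>i<Suc m. u (x + int i)) \<le> int m"
proof (induction m)
  case 0 then show ?case using assms by simp
next
  case (Suc m)
  have "(\<Sum>i<Suc (Suc m). u (x + int i)) = (\<Sum>i<Suc m. u (x + int i)) + u (x + int (Suc m))" by simp
  also have "\<dots> \<le> int m + 1" using Suc assms(2)[of "x + int (Suc m)"] by linarith
  finally show ?case by simp
qed

lemma run_bound:
  assumes v: "\<And>k. u k = 0 \<or> u k = 1" and z: "\<And>b. \<exists>i<N. u (b + int i) = 0"
  shows "u x = 0 \<Longrightarrow> (\<And>i (\<alpha>::nat). i < n \<Longrightarrow> 3 < \<alpha> \<Longrightarrow> \<not> word_at u \<alpha> (x + int i))
     \<Longrightarrow> 4 * (\<Sum>i<n. u (x + int i)) \<le> 3 * int n + 3"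
proof (induction n arbitrary: x rule: less_induct)
  case (less n x)
  have le1: "\<And>k. u k \<le> 1" using v by (metis order.refl zero_le_one)
  show ?case
  proof (cases n)
    case 0 then show ?thesis by simp
  next
    case (Suc m)
    define P where "P d = (0 < d \<and> u (x + int d) = 0)" for d
    obtain i where i: "i < N" "u (x + 1 + int i) = 0" using z by blast
    have ex: "P (Suc i)" unfolding P_def using i by (simp add: add.assoc)
    define d where "d = (LEAST d. P d)"
    have Pd: "P d" unfolding d_def by (rule LeastI[of P, OF ex])
    have ones: "u (x + int i') = 1" if "0 < i'" "i' < d" for i'
    proof -
      have "\<not> P i'" using not_less_Least[of i' P] that unfolding d_def by blast
      thus ?thesis using v[of "x + int i'"] that unfolding P_def by auto
    qed
    have w: "word_at u (d - 1) x"
      unfolding word_at_def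
    proof (intro conjI allI impI)
      show "u x = 0" by (rule less.prems(1))
      fix i' assume "1 \<le> i' \<and> i' \<le> d - 1"
      thus "u (x + int i') = 1" using ones by auto
    next
      have "x + int (d - 1) + 1 = x + int d" using Pd unfolding P_def by auto
      thus "u (x + int (d - 1) + 1) = 0" using Pd unfolding P_def by simp
    qed
    have d4: "d \<le> 4"
    proof (rule ccontr)
      assume "\<not> d \<le> 4"
      hence "3 < d - 1" by simp
      hence "\<not> word_at u (d - 1) (x + int 0)" using less.prems(2)[of 0 "d - 1"] Suc by simp
      thus False using w by simp
    qed
    show ?thesis
    proof (cases "n \<le> d")
      case True
      have "(\<Sum>i<Suc m. u (x + int i)) \<le> int m" by (rule sum_first_zero[of u x, OF less.prems(1) le1])
      moreover have "m \<le> 3" using True d4 Suc by simp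
      ultimately show ?thesis using Suc by simp
    next
      case False
      define r where "r = n - d"
      have n: "n = d + r" using False unfolding r_def by simp
      have r: "r < n" using Pd False unfolding r_def P_def by simp
      have s: "(\<Sum>i<n. u (x + int i)) = (\<Sum>i<d. u (x + int i)) + (\<Sum>i<r. u ((x + int d) + int i))"
        unfolding n sum_split_nat by (simp add: add.assoc)
      obtain d' where d': "d = Suc d'" using Pd unfolding P_def using gr0_conv_Suc by blast
      have s1: "(\<Sum>i<d. u (x + int i)) \<le> int d'" unfolding d' by (rule sum_first_zero[of u x, OF less.prems(1) le1])
      have IH: "4 * (\<Sum>i<r. u ((x + int d) + int i)) \<le> 3 * int r + 3"
      proof (rule less.IH[OF r])
        show "u (x + int d) = 0" using Pd unfolding P_def by simp
        fix i and \<alpha> :: nat assume "i < r" "3 < \<alpha>"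
        hence "\<not> word_at u \<alpha> (x + int (d + i))" using less.prems(2)[of "d+i" \<alpha>] n by simp
        thus "\<not> word_at u \<alpha> (x + int d + int i)" by (simp add: add.assoc)
      qed
      show ?thesis using s s1 IH d4 d' n by simp
    qed
  qed
qed


lemma KC_lr: "t \<in> KC \<Longrightarrow> (tleft t \<in> {S0,S1}) = (tright t \<in> {S0,S1})"
  unfolding KC_def tleft_def tright_def by auto

lemma KC_bot2: "t \<in> KC \<Longrightarrow> tbot t = H2 \<Longrightarrow> tleft t \<notin> {S0,S1}"
  unfolding KC_def tleft_def tbot_def by auto

lemma KC_bot0: "t \<in> KC \<Longrightarrow> tbot t = H0 \<or> tbot t = H0' \<Longrightarrow> tleft t \<in> {S0,S1}"
  unfolding KC_def tleft_def tbot_def by auto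

lemma int_const:
  fixes P :: "int \<Rightarrow> bool"
  assumes "\<And>k. P k = P (k+1)"
  shows "P k = P 0"
proof (induct k rule: int_induct[where k=0])
  case base then show ?case by simp
next
  case (step1 i) then show ?case using assms[of i] by simp
next
  case (step2 i) then show ?case using assms[of "i - 1"] by simp
qed

lemma no_two:
  assumes t: "is_tiling KC \<tau>" and z: "hval (ttop (\<tau> (k', j))) = 0"
  shows "hval (ttop (\<tau> (k, j))) \<noteq> 2"
proof
  assume h: "hval (ttop (\<tau> (k, j))) = 2"
  define P where "P k = (tleft (\<tau> (k, j+1)) \<in> {S0,S1})" for k
  have inKC: "\<And>k j. \<tau> (k,j) \<in> KC" using t unfolding is_tiling_def by blast
  have "P k = P (k+1)" for k
  proof -
    have "tright (\<tau> (k, j+1)) = tleft (\<tau> (k + 1, j+1))" using t unfolding is_tiling_def by blast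
    thus ?thesis unfolding P_def using KC_lr[OF inKC[of k "j+1"]] by simp
  qed
  hence c: "P k = P k'" using int_const[of P] by metis
  have top: "tbot (\<tau> (k, j+1)) = ttop (\<tau> (k, j))" for k using t unfolding is_tiling_def by simp
  have "ttop (\<tau> (k, j)) = H2" using h by (cases "ttop (\<tau> (k, j))") auto
  hence "\<not> P k" unfolding P_def using KC_bot2[OF inKC] top by simp
  moreover have "ttop (\<tau> (k', j)) = H0 \<or> ttop (\<tau> (k', j)) = H0'" using z by (cases "ttop (\<tau> (k', j))") auto
  hence "P k'" unfolding P_def using KC_bot0[OF inKC] top by simp
  ultimately show False using c by simp
qed

lemma sum_ivl: "(\<Sum>k\<in>{a..<a+int n}. f k) = (\<Sum>i<n. f (a + int i))"
proof (induction n)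
  case 0 then show ?case by simp
next
  case (Suc n)
  have "{a..<a+int (Suc n)} = insert (a + int n) {a..<a+int n}" by auto
  then show ?case using Suc by (simp add: add.commute)
qed
theorem mainTheorem5:
  fixes \<tau> :: "int \<times> int \<Rightarrow> tile" and j :: int and L :: real
  assumes "is_tiling KC \<tau>"
    and "has_average (\<lambda>k. hval (ttop (\<tau> (k, j)))) L"
    and "4/5 < L" and "L < 9/10"
  shows "pos_density {k. \<exists>\<alpha>::nat. \<alpha> > 3 \<and> word_at (\<lambda>k. hval (ttop (\<tau> (k, j)))) \<alpha> k}"
proof -
  define u where "u = (\<lambda>k. hval (ttop (\<tau> (k, j))))"
  define S where "S = {k. \<exists>\<alpha>::nat. \<alpha> > 3 \<and> word_at u \<alpha> k}"
  have v012: "u k = 0 \<or> u k = 1 \<or> u k = 2" for k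
    unfolding u_def by (cases "ttop (\<tau> (k, j))") auto
  obtain N0 :: nat where N0: "\<And>a n. n \<ge> N0 \<Longrightarrow> n > 0 \<Longrightarrow>
      \<bar>(\<Sum>i<n. real_of_int (u (a + int i))) / real n - L\<bar> < 1/20"
  proof -
    have "\<exists>N::nat. \<forall>(a::int) (n::nat). n \<ge> N \<longrightarrow> n > 0 \<longrightarrow>
        \<bar>(\<Sum>k\<in>{a..<a + int n}. real_of_int (u k)) / real n - L\<bar> < 1/20"
      using assms(2) unfolding has_average_def u_def[symmetric] by (erule_tac allE[of _ "1/20"]) simp
    then obtain N1 :: nat where "\<forall>(a::int) (n::nat). n \<ge> N1 \<longrightarrow> n > 0 \<longrightarrow>
        \<bar>(\<Sum>k\<in>{a..<a + int n}. real_of_int (u k)) / real n - L\<bar> < 1/20" by blast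
    hence "\<And>a n. n \<ge> N1 \<Longrightarrow> n > 0 \<Longrightarrow>
      \<bar>(\<Sum>i<n. real_of_int (u (a + int i))) / real n - L\<bar> < 1/20" by (simp add: sum_ivl)
    thus ?thesis using that by blast
  qed
  define N where "N = max N0 1"
  have Npos: "N > 0" unfolding N_def by simp
  have zer: "\<exists>i<N. u (b + int i) = 0" for b
  proof (rule ccontr)
    assume "\<not> ?thesis"
    hence ge: "\<And>i. i < N \<Longrightarrow> real_of_int (u (b + int i)) \<ge> 1" using v012 by fastforce
    have "(\<Sum>i<N. real_of_int (u (b + int i))) \<ge> (\<Sum>i<N. 1)" by (rule sum_mono) (use ge in auto)
    hence "(\<Sum>i<N. real_of_int (u (b + int i))) / real N \<ge> 1" using Npos by simp
    moreover have "\<bar>(\<Sum>i<N. real_of_int (u (b + int i))) / real N - L\<bar> < 1/20"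
      using N0[of N b] Npos unfolding N_def by simp
    ultimately show False using assms(4) by linarith
  qed
  have v01: "u k = 0 \<or> u k = 1" for k
  proof -
    obtain i where "u (0 + int i) = 0" using zer by blast
    hence "u k \<noteq> 2" unfolding u_def using no_two[OF assms(1)] by blast
    thus ?thesis using v012[of k] by blast
  qed
  define D :: real where "D = 4 * L - 16/5"
  have Dpos: "D > 0" unfolding D_def using assms(3) by simp
  define K where "K = N + 1 + nat \<lceil>(4 * real N + 3) / D\<rceil>"
  have KN: "K \<ge> N" "K > 0" unfolding K_def by auto
  have KD: "real K * D \<ge> 4 * real N + 3"
  proof -
    have "real K \<ge> (4 * real N + 3) / D" unfolding K_def by linarith
    thus ?thesis using Dpos by (simp add: field_simps)
  qed
  have chunk: "\<exists>k. k \<in> S \<and> a \<le> k \<and> k < a + int K" for a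
  proof (rule ccontr)
    assume nc: "\<not> ?thesis"
    obtain e where e: "e < N" "u (a + int e) = 0" using zer by blast
    define r where "r = K - e"
    have Ke: "K = e + r" unfolding r_def using e KN by simp
    have rb: "4 * (\<Sum>i<r. u ((a + int e) + int i)) \<le> 3 * int r + 3"
    proof (rule run_bound[OF v01 zer, of "a + int e" r])
      show "u (a + int e) = 0" by (rule e(2))
      fix i and \<alpha> :: nat assume "i < r" "3 < \<alpha>"
      hence "a \<le> a + int e + int i" "a + int e + int i < a + int K" unfolding Ke by auto
      thus "\<not> word_at u \<alpha> (a + int e + int i)" using nc \<open>3 < \<alpha>\<close> unfolding S_def by blast
    qed
    have s1: "(\<Sum>i<e. u (a + int i)) \<le> int e"
    proof -
      have "(\<Sum>i<e. u (a + int i)) \<le> (\<Sum>i<e. 1)" by (rule sum_mono) (metis v01 order.refl zero_le_one)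
      thus ?thesis by simp
    qed
    have s: "(\<Sum>i<K. u (a + int i)) = (\<Sum>i<e. u (a + int i)) + (\<Sum>i<r. u ((a + int e) + int i))"
      unfolding Ke sum_split_nat by (simp add: add.assoc)
    have bound: "4 * (\<Sum>i<K. u (a + int i)) \<le> 4 * int N + 3 * int K + 3"
      using s s1 rb Ke e(1) by linarith
    have "\<bar>(\<Sum>i<K. real_of_int (u (a + int i))) / real K - L\<bar> < 1/20"
      using N0[of K a] KN unfolding N_def by simp
    hence "(\<Sum>i<K. real_of_int (u (a + int i))) / real K > L - 1/20" by linarith
    hence gt: "(\<Sum>i<K. real_of_int (u (a + int i))) > (L - 1/20) * real K"
      using KN by (simp add: field_simps)
    have "real_of_int (4 * (\<Sum>i<K. u (a + int i))) \<le> real_of_int (4 * int N + 3 * int K + 3)"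
      using bound by linarith
    hence "4 * (\<Sum>i<K. real_of_int (u (a + int i))) \<le> 4 * real N + 3 * real K + 3" by simp
    hence "4 * ((L - 1/20) * real K) < 4 * real N + 3 * real K + 3" using gt by linarith
    hence "real K * D < 4 * real N + 3" unfolding D_def by (simp add: algebra_simps)
    thus False using KD by linarith
  qed
  have "pos_density S" by (rule density_from_chunks[OF KN(2) chunk])
  thus ?thesis unfolding S_def u_def .
qed

end
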